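(* Let $\mathcal{T}=(Q,E,I,F,f)$ be a transducer that does not satisfy the weak twinning property. Then there exist states $q_1,q_2$, words $u,v\in\Sigma^*$ and $u_1,u_2,v_1,v_2\in\Gamma^*$ with runs $q_1\xrightarrow{u\mid u_1}q_1\xrightarrow{v\mid v_1}q_1\xrightarrow{u\mid u_2}q_2\xrightarrow{v\mid v_2}q_2$ such that for every $n\in\mathbb{N}$, $|\Delta(u_1v_1^n,u_2v_2^n)|\ge n$.
   Context: A transducer has finite state set $Q$, initial states $I$, final states $F$, transitions $E\subseteq Q\times\Sigma\times\Gamma^*\times Q$ and final output $f:F\to\Gamma^*$. We write $p\xrightarrow{u\mid w}q$ if there is a run from $p$ to $q$ reading $u$ and outputting $w$. $\Delta(v,w)=v^{-1}w$ is computed in the free group over $\Gamma$, and $|\cdot|$ of a free-group element is the length of its reduced word over $\Gamma\cup\Gamma^{-1}$. The transducer satisfies the weak twinning property if for all states $q_1,q_2$, all $u,v\in\Sigma^*$ and $u_1,u_2,v_1,v_2\in\Gamma^*$ with $q_1\xrightarrow{u\mid u_1}q_1$, $q_1\xrightarrow{v\mid v_1}q_1$, $q_1\xrightarrow{u\mid u_2}q_2$, $q_2\xrightarrow{v\mid v_2}q_2$, one has $\Delta(u_1,u_2)=\Delta(u_1v_1,u_2v_2)$. *)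

theory Defs
  imports Main
begin

record ('q, 'a, 'b) transducer =
  states :: "'q set"
  init   :: "'q set"
  final  :: "'q set"
  trans  :: "('q \<times> 'a \<times> 'b list \<times> 'q) set"
  fout   :: "'q \<Rightarrow> 'b list"

definition wf_transducer :: "('q, 'a, 'b) transducer \<Rightarrow> bool" where
  "wf_transducer T \<longleftrightarrow> finite (states T) \<and> finite (trans T) \<and>
     init T \<subseteq> states T \<and> final T \<subseteq> states T \<and>
     (\<forall>(p, a, w, q) \<in> trans T. p \<in> states T \<and> q \<in> states T)"

inductive run :: "('q, 'a, 'b) transducer \<Rightarrow> 'q \<Rightarrow> 'a list \<Rightarrow> 'b list \<Rightarrow> 'q \<Rightarrow> bool"
  for T where
  run_nil: "run T p [] [] p"
| run_step: "(p, a, x, p') \<in> trans T \<Longrightarrow> run T p' u w q \<Longrightarrow> run T p (a # u) (x @ w) q"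

text \<open>Free group over 'b: letters (True, g) = g, (False, g) = g^{-1};
  elements are represented by freely reduced words.\<close>
type_synonym 'b fg_word = "(bool \<times> 'b) list"

definition inv_letter :: "bool \<times> 'b \<Rightarrow> bool \<times> 'b" where
  "inv_letter x = (\<not> fst x, snd x)"

definition fg_reduce :: "'b fg_word \<Rightarrow> 'b fg_word" where
  "fg_reduce xs = foldr (\<lambda>x acc. case acc of [] \<Rightarrow> [x]
       | y # ys \<Rightarrow> (if y = inv_letter x then ys else x # acc)) xs []"

definition fg_of :: "'b list \<Rightarrow> 'b fg_word" where
  "fg_of w = map (\<lambda>g. (True, g)) w"

definition fg_inv :: "'b fg_word \<Rightarrow> 'b fg_word" where
  "fg_inv xs = rev (map inv_letter xs)"

definition Delta :: "'b list \<Rightarrow> 'b list \<Rightarrow> 'b fg_word" where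
  "Delta v w = fg_reduce (fg_inv (fg_of v) @ fg_of w)"

definition fg_norm :: "'b fg_word \<Rightarrow> nat" where
  "fg_norm x = length (fg_reduce x)"

definition weak_twinning :: "('q, 'a, 'b) transducer \<Rightarrow> bool" where
  "weak_twinning T \<longleftrightarrow>
    (\<forall>q1\<in>states T. \<forall>q2\<in>states T. \<forall>u v u1 u2 v1 v2.
       run T q1 u u1 q1 \<longrightarrow> run T q1 v v1 q1 \<longrightarrow>
       run T q1 u u2 q2 \<longrightarrow> run T q2 v v2 q2 \<longrightarrow>
       Delta u1 u2 = Delta (u1 @ v1) (u2 @ v2))"

end

theory Submission
  imports Defs
begin

fun lcp :: "'b list \<Rightarrow> 'b list \<Rightarrow> nat" where
  "lcp (a#x) (b#y) = (if a = b then Suc (lcp x y) else 0)"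
| "lcp _ _ = 0"

lemma lcp_le: "lcp x y \<le> length x" "lcp x y \<le> length y"
  by (induction x y rule: lcp.induct) auto

lemma lcp_ge: "take L x = take L y \<Longrightarrow> L \<le> length x \<Longrightarrow> L \<le> length y \<Longrightarrow> L \<le> lcp x y"
proof (induction x y arbitrary: L rule: lcp.induct)
  case (1 a x b y)
  then show ?case by (cases L) auto
qed auto

lemma lcp_decomp: "\<exists>p x' y'. x = p @ x' \<and> y = p @ y' \<and> (x' = [] \<or> y' = [] \<or> hd x' \<noteq> hd y') \<and> length p = lcp x y"
proof (induction x y rule: lcp.induct)
  case (1 a x b y)
  show ?case
  proof (cases "a = b")
    case True
    with 1 obtain p x' y' where "x = p @ x'" "y = p @ y'" "(x' = [] \<or> y' = [] \<or> hd x' \<noteq> hd y')" "length p = lcp x y"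
      by blast
    with True show ?thesis by (intro exI[of _ "a#p"] exI[of _ x'] exI[of _ y']) auto
  next
    case False
    then show ?thesis by (intro exI[of _ "[]"] exI[of _ "a#x"] exI[of _ "b#y"]) auto
  qed
qed auto

definition stp :: "bool \<times> 'b \<Rightarrow> 'b fg_word \<Rightarrow> 'b fg_word" where
  "stp = (\<lambda>x acc. case acc of [] \<Rightarrow> [x]
       | y # ys \<Rightarrow> (if y = inv_letter x then ys else x # acc))"

lemma red_foldr: "fg_reduce xs = foldr stp xs []"
  unfolding fg_reduce_def stp_def ..

lemma red_app: "fg_reduce (A @ B) = foldr stp A (fg_reduce B)"
  by (simp add: red_foldr)

lemma red_T: "fg_reduce (map (Pair True) y) = map (Pair True) y"
proof (induction y)
  case (Cons a y)
  then show ?case by (cases y) (auto simp: red_foldr stp_def inv_letter_def)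
qed (simp add: red_foldr)

lemma L1: "r \<noteq> [] \<or> y = [] \<Longrightarrow>
  foldr stp (rev (map (Pair False) x)) (map (Pair False) r @ map (Pair True) y)
  = map (Pair False) (rev x @ r) @ map (Pair True) y"
proof (induction x arbitrary: r)
  case (Cons a x)
  have "stp (False, a) (map (Pair False) r @ map (Pair True) y) = map (Pair False) (a # r) @ map (Pair True) y"
    using Cons.prems by (cases r) (auto simp: stp_def inv_letter_def)
  then show ?case using Cons.IH[of "a#r"] by simp
qed simp

lemma D0: "Delta x y = foldr stp (rev (map (Pair False) x)) (map (Pair True) y)"
proof -
  have "fg_inv (fg_of x) = rev (map (Pair False) x)"
    by (simp add: fg_inv_def fg_of_def inv_letter_def)
  then show ?thesis unfolding Delta_def
    by (simp add: red_app fg_of_def red_T)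
qed

lemma C: "foldr stp (rev (map (Pair False) p)) (map (Pair True) (p @ y)) = map (Pair True) y"
proof (induction p)
  case (Cons a p)
  then show ?case by (simp add: stp_def inv_letter_def)
qed simp

lemma D1: "Delta (p @ x) (p @ y) = Delta x y"
proof -
  have "rev (map (Pair False) (p @ x)) = rev (map (Pair False) x) @ rev (map (Pair False) p)"
    by simp
  then show ?thesis unfolding D0 using C[of p y] by (simp only: foldr_append o_apply)
qed

lemma D2: "x = [] \<or> y = [] \<or> hd x \<noteq> hd y \<Longrightarrow>
   Delta x y = map (Pair False) (rev x) @ map (Pair True) y"
proof -
  assume h: "x = [] \<or> y = [] \<or> hd x \<noteq> hd y"
  show ?thesis
  proof (cases "x = []")
    case True then show ?thesis by (simp add: D0)
  next
    case False
    then obtain a x0 where x: "x = a # x0" by (cases x) auto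
    show ?thesis
    proof (cases "y = []")
      case True
      then show ?thesis using L1[of "[]" "[]" x] by (simp add: D0)
    next
      case False
      then obtain b y0 where y: "y = b # y0" by (cases y) auto
      with h x have "a \<noteq> b" by simp
      then have "stp (False, a) (map (Pair True) y) = map (Pair False) [a] @ map (Pair True) y"
        using y by (simp add: stp_def inv_letter_def)
      then show ?thesis using L1[of "[a]" y x0] x by (simp add: D0)
    qed
  qed
qed

lemma D3: "fg_reduce (Delta x y) = Delta x y"
proof -
  obtain p x' y' where d: "x = p @ x'" "y = p @ y'" "(x' = [] \<or> y' = [] \<or> hd x' \<noteq> hd y')"
    using lcp_decomp by blast
  have e: "Delta x y = Delta x' y'" using d D1[of p x' y'] by simp
  have "Delta x' y' = rev (map (Pair False) x') @ map (Pair True) y'"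
    using d D2[of x' y'] by (simp add: rev_map)
  then show ?thesis unfolding e
    by (simp add: red_app red_T D0[symmetric])
qed

lemma norm_Delta: "fg_norm (Delta x y) = length x + length y - 2 * lcp x y"
proof -
  obtain p x' y' where d: "x = p @ x'" "y = p @ y'" "(x' = [] \<or> y' = [] \<or> hd x' \<noteq> hd y')"
    "length p = lcp x y"
    using lcp_decomp by blast
  have "Delta x y = map (Pair False) (rev x') @ map (Pair True) y'"
    using d D1[of p x' y'] D2[of x' y'] by simp
  then show ?thesis using d unfolding fg_norm_def D3 by simp
qed


abbreviation pw :: "'c list \<Rightarrow> nat \<Rightarrow> 'c list" where
  "pw v n \<equiv> concat (replicate n v)"

lemma pw_len: "length (pw v n) = n * length v"
  by (induction n) auto

lemma pw_mult: "pw (pw v k) n = pw v (n * k)"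
  by (induction n) (auto simp: replicate_add)

lemma pw_Suc2: "pw v (Suc n) = pw v n @ v"
proof -
  have "pw v n @ v = concat (replicate n v @ [v])" by simp
  also have "\<dots> = concat (v # replicate n v)" by (simp only: replicate_append_same)
  finally show ?thesis by simp
qed

lemma run_append: "run T p u w q \<Longrightarrow> run T q u' w' r \<Longrightarrow> run T p (u @ u') (w @ w') r"
  by (induction rule: run.induct) (auto intro: run.intros)

lemma run_pw: "run T q v w q \<Longrightarrow> run T q (pw v k) (pw w k) q"
  by (induction k) (auto intro: run.intros run_append)

lemma key:
  assumes m: "length v1 = length v2" and le: "length u1 \<le> length u2"
    and t: "take L (u1 @ pw v1 N) = take L (u2 @ pw v2 N)"
    and L: "L = length u2 + length v2" and Ly: "L \<le> length (u2 @ pw v2 N)"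
  shows "\<exists>w. u2 = u1 @ w \<and> v1 @ w = w @ v2"
proof -
  define w where "w = take (length u2 - length u1) (pw v1 N)"
  have "take (length u2) (u1 @ pw v1 N) = take (length u2) (take L (u1 @ pw v1 N))"
    using L le by (simp add: min_def)
  also have "\<dots> = take (length u2) (u2 @ pw v2 N)" using t L by simp
  finally have u2: "u2 = u1 @ w" using le by (simp add: w_def)
  show ?thesis
  proof (cases "length v2 = 0")
    case True
    then show ?thesis using m u2 by auto
  next
    case False
    have "N \<noteq> 0"
    proof
      assume "N = 0" then show False using Ly L False by simp
    qed
    then obtain N' where N: "N = Suc N'" by (cases N) auto
    have lw: "length w = length u2 - length u1" using u2 by simp
    have "take L (u1 @ pw v1 N) = u1 @ take (length w + length v2) (pw v1 N)"
      using L lw le by simp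
    moreover have "take L (u2 @ pw v2 N) = u1 @ w @ v2"
      using L u2 N by simp
    ultimately have e: "take (length w + length v2) (pw v1 N) = w @ v2" using t by simp
    then have "length w + length v2 \<le> length (pw v1 N)"
      by (metis length_append length_take min.absorb_iff1 min.commute)
    then have lw2: "length w \<le> length (pw v1 N')" using N m by (simp add: pw_len)
    have "w = take (length w) (pw v1 N)" using w_def lw by simp
    also have "\<dots> = take (length w) (pw v1 N' @ v1)" using N pw_Suc2 by metis
    also have "\<dots> = take (length w) (pw v1 N')" using lw2 by simp
    finally have w: "w = take (length w) (pw v1 N')" .
    have "take (length w + length v2) (pw v1 N) = v1 @ take (length w) (pw v1 N')"
      using N m by simp
    then have "v1 @ w = w @ v2" using e w by simp
    then show ?thesis using u2 by blast
  qed
qed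


lemma arithA:
  fixes a b c d n k l :: nat
  assumes "a \<noteq> b" "k = c + d + 1" "l \<le> c + n*k*a" "l \<le> d + n*k*b"
  shows "n \<le> (c + n*k*a) + (d + n*k*b) - 2*l"
proof (cases "n = 0")
  case True then show ?thesis by simp
next
  case False
  have h1: "c + d \<le> n*(c+d)" using False by simp
  have h2: "n*k = n*(c+d) + n" using assms(2) by simp
  show ?thesis
  proof (cases "a < b")
    case True
    then have "n*k*(a+1) \<le> n*k*b" by (intro mult_le_mono2) simp
    then have "n*k*a + n*k \<le> n*k*b" by (simp add: algebra_simps)
    then show ?thesis using h1 h2 assms(3,4) by linarith
  next
    case False
    then have "b < a" using assms(1) by simp
    then have "n*k*(b+1) \<le> n*k*a" by (intro mult_le_mono2) simp
    then have "n*k*b + n*k \<le> n*k*a" by (simp add: algebra_simps)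
    then show ?thesis using h1 h2 assms(3,4) by linarith
  qed
qed

lemma arithB:
  fixes m c d n k l L :: nat
  assumes "m \<ge> 1" "k = L + 1" "l < L"
  shows "n \<le> (c + n*k*m) + (d + n*k*m) - 2*l"
proof (cases "n = 0")
  case True then show ?thesis by simp
next
  case False
  have h1: "L \<le> n*L" using False by simp
  have h3: "n*k \<le> n*k*m" using assms(1) by simp
  have h4: "n*k = n*L + n" using assms(2) by simp
  show ?thesis using h1 h3 h4 assms(3) by linarith
qed


lemma lcp_take_le: "L \<le> lcp x y \<Longrightarrow> take L x = take L y"
proof (induction x y arbitrary: L rule: lcp.induct)
  case (1 a x b y)
  then show ?case by (cases L) (auto split: if_splits)
qed auto

theorem lemma8:
  fixes T :: "('q, 'a, 'b) transducer"
  assumes "wf_transducer T"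
    and "\<not> weak_twinning T"
  shows "\<exists>q1\<in>states T. \<exists>q2\<in>states T. \<exists>(u::'a list) v (u1::'b list) u2 v1 v2.
           run T q1 u u1 q1 \<and> run T q1 v v1 q1 \<and>
           run T q1 u u2 q2 \<and> run T q2 v v2 q2 \<and>
           (\<forall>n::nat. fg_norm (Delta (u1 @ concat (replicate n v1))
                                    (u2 @ concat (replicate n v2))) \<ge> n)"
proof -
  from assms(2) obtain q1 q2 u v u1 u2 v1 v2 where q: "q1 \<in> states T" "q2 \<in> states T"
    and r: "run T q1 u u1 q1" "run T q1 v v1 q1" "run T q1 u u2 q2" "run T q2 v v2 q2"
    and ne: "Delta u1 u2 \<noteq> Delta (u1 @ v1) (u2 @ v2)"
    unfolding weak_twinning_def by blast
  have "\<exists>k. \<forall>n. n \<le> fg_norm (Delta (u1 @ pw v1 (n*k)) (u2 @ pw v2 (n*k)))"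
  proof (cases "length v1 = length v2")
    case False
    show ?thesis
    proof (intro exI allI)
      fix n
      let ?x = "u1 @ pw v1 (n*(length u1 + length u2 + 1))"
      let ?y = "u2 @ pw v2 (n*(length u1 + length u2 + 1))"
      have "n \<le> (length u1 + n*(length u1 + length u2 + 1)*length v1)
                + (length u2 + n*(length u1 + length u2 + 1)*length v2) - 2 * lcp ?x ?y"
        using lcp_le[of ?x ?y]
        by (intro arithA[OF False refl]) (simp_all add: pw_len mult.assoc)
      then show "n \<le> fg_norm (Delta ?x ?y)"
        unfolding norm_Delta by (simp add: pw_len mult.assoc)
    qed
  next
    case True
    define m where "m = length v2"
    have m0: "m \<ge> 1"
    proof (rule ccontr)
      assume "\<not> m \<ge> 1"
      then have "length v1 = 0" "length v2 = 0" using True m_def by linarith+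
      then have "v1 = []" "v2 = []" by simp_all
      then show False using ne by simp
    qed
    define L where "L = max (length u1) (length u2) + m"
    show ?thesis
    proof (intro exI allI)
      fix n
      define N where "N = n * (L+1)"
      let ?x = "u1 @ pw v1 N"
      let ?y = "u2 @ pw v2 N"
      have lt: "lcp ?x ?y < L"
      proof (rule ccontr)
        assume "\<not> lcp ?x ?y < L"
        then have lL: "L \<le> lcp ?x ?y" by simp
        show False
        proof (cases "length u1 \<le> length u2")
          case le: True
          have "take (length u2 + length v2) ?x = take (length u2 + length v2) ?y"
            by (rule lcp_take_le) (use lL L_def m_def in simp)
          moreover have "length u2 + length v2 \<le> length ?y"
            using lL lcp_le[of ?x ?y] L_def m_def by simp
          ultimately obtain w where w: "u2 = u1 @ w" "v1 @ w = w @ v2"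
            using key[OF True le _ refl] by blast
          have "Delta (u1 @ v1) (u2 @ v2) = Delta v1 (w @ v2)"
            using D1[of u1 v1 "w @ v2"] w by simp
          also have "\<dots> = Delta [] w" using D1[of v1 "[]" w] w by simp
          also have "\<dots> = Delta u1 u2" using D1[of u1 "[]" w] w by simp
          finally show False using ne by simp
        next
          case le: False
          then have le: "length u2 \<le> length u1" by simp
          have "take (length u1 + length v1) ?y = take (length u1 + length v1) ?x"
            by (rule sym, rule lcp_take_le) (use lL L_def m_def True in simp)
          moreover have "length u1 + length v1 \<le> length ?x"
            using lL lcp_le[of ?x ?y] L_def m_def True by simp
          ultimately obtain w where w: "u1 = u2 @ w" "v2 @ w = w @ v1"
            using key[OF True[symmetric] le _ refl] by blast
          have "Delta (u1 @ v1) (u2 @ v2) = Delta (w @ v1) v2"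
            using D1[of u2 "w @ v1" v2] w by simp
          also have "\<dots> = Delta w []" using D1[of v2 w "[]"] w by simp
          also have "\<dots> = Delta u1 u2" using D1[of u2 w "[]"] w by simp
          finally show False using ne by simp
        qed
      qed
      have "n \<le> (length u1 + n*(L+1)*m) + (length u2 + n*(L+1)*m) - 2 * lcp ?x ?y"
        by (rule arithB[OF m0 refl lt])
      then show "n \<le> fg_norm (Delta (u1 @ pw v1 (n * (L+1))) (u2 @ pw v2 (n * (L+1))))"
        unfolding norm_Delta N_def[symmetric] using True m_def
        by (simp add: pw_len N_def)
    qed
  qed
  then obtain k where k: "\<forall>n. n \<le> fg_norm (Delta (u1 @ pw v1 (n*k)) (u2 @ pw v2 (n*k)))" by blast
  show ?thesis
  proof (intro bexI exI conjI allI)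
    show "run T q1 u u1 q1" "run T q1 u u2 q2" by (fact r(1), fact r(3))
    show "run T q1 (pw v k) (pw v1 k) q1" by (rule run_pw[OF r(2)])
    show "run T q2 (pw v k) (pw v2 k) q2" by (rule run_pw[OF r(4)])
    fix n
    show "n \<le> fg_norm (Delta (u1 @ pw (pw v1 k) n) (u2 @ pw (pw v2 k) n))"
      using k by (simp add: pw_mult)
  qed (fact q)+
qed

end
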